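(* Let $R\ge1$, $\mathbf{x}$ a vector of pairwise distinct reals, $\mathbf{c}\in\mathbb{R}^R$, $B=B(\mathbf{x},\mathbf{c})$, $1\le n\le R$, and $k$ a positive integer. Let $B_{-n}$ denote the matrix obtained from $B$ by deleting its $n$-th row and $n$-th column, with rows and columns still indexed by $\{1,\dots,R\}\setminus\{n\}$. Then $$\sum_{\substack{1\le l,m\le R\\ l\ne n,\ m\ne n,\ l\ne m}} b_{n,l}\,b_{m,n}\,(B_{-n}^k)_{l,m}=0.$$ Equivalently, for every $k\ge1$ the off-diagonal entries of $B_{-n}^k$ satisfy this weighted vanishing relation.
   Context: For pairwise distinct reals $x_1,\dots,x_R$ and reals $c_1,\dots,c_R$, $B=B(\mathbf{x},\mathbf{c})$ is the $R\times R$ matrix with entries $b_{m,m}=0$ and $b_{m,n}=\frac{c_mc_n}{x_m-x_n}$ for $m\ne n$. *)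

theory Defs
  imports Complex_Main
begin

text \<open>Matrices over an index set are represented as functions nat => nat => real;
  only entries with both indices in the index set are meaningful.\<close>

definition Bmat :: "(nat \<Rightarrow> real) \<Rightarrow> (nat \<Rightarrow> real) \<Rightarrow> nat \<Rightarrow> nat \<Rightarrow> real" where
  "Bmat x c m n = (if m = n then 0 else c m * c n / (x m - x n))"

fun mat_pow_on :: "nat set \<Rightarrow> (nat \<Rightarrow> nat \<Rightarrow> real) \<Rightarrow> nat \<Rightarrow> nat \<Rightarrow> nat \<Rightarrow> real" where
  "mat_pow_on S M 0 i j = (if i = j then 1 else 0)"
| "mat_pow_on S M (Suc k) i j = (\<Sum>l\<in>S. mat_pow_on S M k i l * M l j)"

end

theory Submission
  imports Defs
begin

lemma B_antisym: "Bmat x c l m = - Bmat x c m l"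
proof (cases "l = m")
  case False
  have "x l - x m = - (x m - x l)" by simp
  then show ?thesis using False by (simp add: Bmat_def divide_simps minus_divide_right mult.commute)
qed (simp add: Bmat_def)

lemma pow_left:
  assumes "finite S" "i \<in> S" "j \<in> S"
  shows "mat_pow_on S M (Suc k) i j = (\<Sum>l\<in>S. M i l * mat_pow_on S M k l j)"
  using assms(2,3)
proof (induction k arbitrary: j)
  case 0
  have "(\<Sum>l\<in>S. (if i = l then 1 else 0) * M l j) = M i j"
  proof -
    have "(\<Sum>l\<in>S. (if i = l then 1 else 0) * M l j) = (\<Sum>l\<in>S. if i = l then M l j else 0)"
      by (intro sum.cong) auto
    then show ?thesis using assms(1) 0 by (simp add: sum.delta)
  qed
  moreover have "(\<Sum>l\<in>S. M i l * (if l = j then 1 else 0)) = M i j"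
  proof -
    have "(\<Sum>l\<in>S. M i l * (if l = j then 1 else 0)) = (\<Sum>l\<in>S. if l = j then M i l else 0)"
      by (intro sum.cong) auto
    then show ?thesis using assms(1) 0 by (simp add: sum.delta')
  qed
  ultimately show ?case by simp
next
  case (Suc k)
  have "mat_pow_on S M (Suc (Suc k)) i j = (\<Sum>l\<in>S. mat_pow_on S M (Suc k) i l * M l j)" by simp
  also have "\<dots> = (\<Sum>l\<in>S. (\<Sum>p\<in>S. M i p * mat_pow_on S M k p l) * M l j)"
    using Suc by (intro sum.cong) auto
  also have "\<dots> = (\<Sum>l\<in>S. \<Sum>p\<in>S. M i p * (mat_pow_on S M k p l * M l j))"
    by (simp add: sum_distrib_right mult.assoc)
  also have "\<dots> = (\<Sum>p\<in>S. \<Sum>l\<in>S. M i p * (mat_pow_on S M k p l * M l j))"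
    by (rule sum.swap)
  also have "\<dots> = (\<Sum>p\<in>S. M i p * mat_pow_on S M (Suc k) p j)"
    by (simp add: sum_distrib_left)
  finally show ?case .
qed

theorem lemma1:
  fixes R n k :: nat and x c :: "nat \<Rightarrow> real"
  assumes "R \<ge> 1"
    and "inj_on x {1..R}"
    and "1 \<le> n" and "n \<le> R"
    and "k \<ge> 1"
  shows "(\<Sum>l\<in>{1..R} - {n}. \<Sum>m\<in>{1..R} - {n}.
           (if l \<noteq> m then Bmat x c n l * Bmat x c m n
              * mat_pow_on ({1..R} - {n}) (Bmat x c) k l m else 0)) = 0"
proof -
  define S where "S = {1..R} - {n}"
  define B where "B = Bmat x c"
  define P where "P = mat_pow_on S B k"
  define u where "u l = c n / (x n - x l)" for l
  have fS: "finite S" by (simp add: S_def)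
  have key: "B n l * B m n = c n * (u m - u l) * B l m" if "l \<in> S" "m \<in> S" "l \<noteq> m" for l m
  proof -
    have nS: "n \<in> {1..R}" using assms by auto
    have n1: "x n \<noteq> x l" using assms(2) that nS unfolding S_def inj_on_def by blast
    moreover have n2: "x n \<noteq> x m" using assms(2) that nS unfolding S_def inj_on_def by blast
    moreover have n3: "x l \<noteq> x m" using assms(2) that unfolding S_def inj_on_def by blast
    moreover have "l \<noteq> n" "m \<noteq> n" using that by (auto simp: S_def)
    ultimately have d: "x n - x l \<noteq> 0" "x n - x m \<noteq> 0" "x l - x m \<noteq> 0" "x m - x n \<noteq> 0" by auto
    show ?thesis using that(3) \<open>l \<noteq> n\<close> \<open>m \<noteq> n\<close>
      unfolding B_def Bmat_def u_def
      apply (simp add: divide_simps d)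
      apply (simp add: algebra_simps)
      using n1 n2 n3 by auto
  qed
  have "(\<Sum>l\<in>S. \<Sum>m\<in>S. (if l \<noteq> m then B n l * B m n * P l m else 0))
      = (\<Sum>l\<in>S. \<Sum>m\<in>S. c n * (u m - u l) * (B l m * P l m))"
  proof (intro sum.cong refl)
    fix l m assume lm: "l \<in> S" "m \<in> S"
    show "(if l \<noteq> m then B n l * B m n * P l m else 0) = c n * (u m - u l) * (B l m * P l m)"
    proof (cases "l = m")
      case True then show ?thesis by (simp add: B_def Bmat_def)
    next
      case False then show ?thesis using key[OF lm False] by simp
    qed
  qed
  also have "\<dots> = c n * ((\<Sum>m\<in>S. u m * (\<Sum>l\<in>S. B l m * P l m))
                      - (\<Sum>l\<in>S. u l * (\<Sum>m\<in>S. B l m * P l m)))"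
    apply (simp add: sum_distrib_left sum_distrib_right algebra_simps sum_subtractf)
    apply (subst sum.swap) apply (simp add: algebra_simps)
    done
  also have "(\<Sum>m\<in>S. u m * (\<Sum>l\<in>S. B l m * P l m)) = (\<Sum>m\<in>S. u m * (- mat_pow_on S B (Suc k) m m))"
  proof (intro sum.cong refl)
    fix m assume m: "m \<in> S"
    have "(\<Sum>l\<in>S. B l m * P l m) = (\<Sum>l\<in>S. - (B m l * P l m))"
      by (intro sum.cong refl) (simp add: B_def B_antisym[of x c _ m])
    also have "\<dots> = - mat_pow_on S B (Suc k) m m"
      using pow_left[OF fS m m] by (simp add: P_def sum_negf)
    finally show "u m * (\<Sum>l\<in>S. B l m * P l m) = u m * (- mat_pow_on S B (Suc k) m m)" by simp
  qed
  also have "(\<Sum>l\<in>S. u l * (\<Sum>m\<in>S. B l m * P l m)) = (\<Sum>m\<in>S. u m * (- mat_pow_on S B (Suc k) m m))"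
  proof (intro sum.cong refl)
    fix l assume l: "l \<in> S"
    have "(\<Sum>m\<in>S. B l m * P l m) = (\<Sum>m\<in>S. - (P l m * B m l))"
      by (intro sum.cong refl) (simp add: B_def B_antisym[of x c l])
    also have "\<dots> = - mat_pow_on S B (Suc k) l l"
      by (simp add: P_def sum_negf)
    finally show "u l * (\<Sum>m\<in>S. B l m * P l m) = u l * (- mat_pow_on S B (Suc k) l l)" by simp
  qed
  finally have "(\<Sum>l\<in>S. \<Sum>m\<in>S. (if l \<noteq> m then B n l * B m n * P l m else 0)) = 0" by simp
  then show ?thesis unfolding S_def B_def P_def .
qed

end
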